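(* Let $A$ be a nicely essential subring of a ring $S$. Then: (1) If $A$ is prime (respectively, semiprime), then so is $S$; if $A$ is prime (resp. semiprime) and left Goldie, then $S$ is prime (resp. semiprime) and left Goldie. (2) If $S$ is left Goldie, then so is $A$. (3) If $S$ is prime (respectively, semiprime) and left Goldie, then every strongly nicely essential subring of $S$ is prime (respectively, semiprime) and left Goldie.
   Context: A subring $A$ of a ring $S$ (same identity) is a nicely essential subring if for every finite set $E\subseteq S$ of non-zero elements there exists $a\in A$ with $0\neq ax\in A$ for all $x\in E$. It is a strongly nicely essential subring if moreover for every $x\in S$ there exists a left regular element $c$ of $A$ (i.e. $c\in A$ with $\{a\in A: ac=0\}=0$) such that $cx\in A$. A ring is left Goldie if it has finite left uniform dimension and satisfies the ascending chain condition on left annihilators. *)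

theory Defs
  imports "HOL-Algebra.Algebra"
begin

text \<open>All rings are associative with identity (HOL-Algebra ring). A subring A of S is
  a subset with subring A S (contains the identity of S); A viewed as a ring is
  S restricted to carrier A.\<close>

definition prime_ring :: "('a, 'b) ring_scheme \<Rightarrow> bool" where
  "prime_ring R \<longleftrightarrow> \<one>\<^bsub>R\<^esub> \<noteq> \<zero>\<^bsub>R\<^esub> \<and>
     (\<forall>a\<in>carrier R. \<forall>b\<in>carrier R.
        (\<forall>r\<in>carrier R. a \<otimes>\<^bsub>R\<^esub> r \<otimes>\<^bsub>R\<^esub> b = \<zero>\<^bsub>R\<^esub>)
        \<longrightarrow> a = \<zero>\<^bsub>R\<^esub> \<or> b = \<zero>\<^bsub>R\<^esub>)"

definition semiprime_ring :: "('a, 'b) ring_scheme \<Rightarrow> bool" where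
  "semiprime_ring R \<longleftrightarrow>
     (\<forall>a\<in>carrier R. (\<forall>r\<in>carrier R. a \<otimes>\<^bsub>R\<^esub> r \<otimes>\<^bsub>R\<^esub> a = \<zero>\<^bsub>R\<^esub>)
        \<longrightarrow> a = \<zero>\<^bsub>R\<^esub>)"

definition left_ideal :: "'a set \<Rightarrow> ('a, 'b) ring_scheme \<Rightarrow> bool" where
  "left_ideal I R \<longleftrightarrow> additive_subgroup I R \<and>
     (\<forall>r\<in>carrier R. \<forall>x\<in>I. r \<otimes>\<^bsub>R\<^esub> x \<in> I)"

definition independent_family :: "('a, 'b) ring_scheme \<Rightarrow> nat \<Rightarrow> (nat \<Rightarrow> 'a set) \<Rightarrow> bool" where
  "independent_family R n I \<longleftrightarrow>
     (\<forall>x. (\<forall>i<n. x i \<in> I i) \<and> finsum R x {..<n} = \<zero>\<^bsub>R\<^esub>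
        \<longrightarrow> (\<forall>i<n. x i = \<zero>\<^bsub>R\<^esub>))"

definition finite_left_udim :: "('a, 'b) ring_scheme \<Rightarrow> bool" where
  "finite_left_udim R \<longleftrightarrow> (\<exists>N::nat. \<forall>n I.
      (\<forall>i<n. left_ideal (I i) R \<and> I i \<noteq> {\<zero>\<^bsub>R\<^esub>}) \<and> independent_family R n I
      \<longrightarrow> n \<le> N)"

definition left_ann :: "('a, 'b) ring_scheme \<Rightarrow> 'a set \<Rightarrow> 'a set" where
  "left_ann R Y = {r. r \<in> carrier R \<and> (\<forall>y\<in>Y. r \<otimes>\<^bsub>R\<^esub> y = \<zero>\<^bsub>R\<^esub>)}"

definition acc_left_ann :: "('a, 'b) ring_scheme \<Rightarrow> bool" where
  "acc_left_ann R \<longleftrightarrow> (\<forall>f :: nat \<Rightarrow> 'a set.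
      (\<forall>n. \<exists>Y. Y \<subseteq> carrier R \<and> f n = left_ann R Y) \<and> (\<forall>n. f n \<subseteq> f (Suc n))
      \<longrightarrow> (\<exists>m. \<forall>n\<ge>m. f n = f m))"

definition left_goldie :: "('a, 'b) ring_scheme \<Rightarrow> bool" where
  "left_goldie R \<longleftrightarrow> finite_left_udim R \<and> acc_left_ann R"

definition nicely_essential :: "'a set \<Rightarrow> ('a, 'b) ring_scheme \<Rightarrow> bool" where
  "nicely_essential A S \<longleftrightarrow> subring A S \<and>
     (\<forall>E. finite E \<and> E \<subseteq> carrier S - {\<zero>\<^bsub>S\<^esub>} \<longrightarrow>
        (\<exists>a\<in>A. \<forall>x\<in>E. a \<otimes>\<^bsub>S\<^esub> x \<noteq> \<zero>\<^bsub>S\<^esub> \<and> a \<otimes>\<^bsub>S\<^esub> x \<in> A))"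

definition left_regular_in :: "'a \<Rightarrow> 'a set \<Rightarrow> ('a, 'b) ring_scheme \<Rightarrow> bool" where
  "left_regular_in c A S \<longleftrightarrow> c \<in> A \<and>
     {a. a \<in> A \<and> a \<otimes>\<^bsub>S\<^esub> c = \<zero>\<^bsub>S\<^esub>} = {\<zero>\<^bsub>S\<^esub>}"

definition strongly_nicely_essential :: "'a set \<Rightarrow> ('a, 'b) ring_scheme \<Rightarrow> bool" where
  "strongly_nicely_essential A S \<longleftrightarrow> nicely_essential A S \<and>
     (\<forall>x\<in>carrier S. \<exists>c. left_regular_in c A S \<and> c \<otimes>\<^bsub>S\<^esub> x \<in> A)"

end

theory Submission
  imports Defs
begin

lemma (in ring) addsub_iff:
  "additive_subgroup H R \<longleftrightarrow> H \<subseteq> carrier R \<and> \<zero> \<in> H \<and> (\<forall>x\<in>H. \<forall>y\<in>H. x \<oplus> y \<in> H) \<and> (\<forall>x\<in>H. \<ominus> x \<in> H)"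
proof
  assume "additive_subgroup H R"
  then interpret additive_subgroup H R .
  show "H \<subseteq> carrier R \<and> \<zero> \<in> H \<and> (\<forall>x\<in>H. \<forall>y\<in>H. x \<oplus> y \<in> H) \<and> (\<forall>x\<in>H. \<ominus> x \<in> H)"
    using a_subset by auto
next
  assume h: "H \<subseteq> carrier R \<and> \<zero> \<in> H \<and> (\<forall>x\<in>H. \<forall>y\<in>H. x \<oplus> y \<in> H) \<and> (\<forall>x\<in>H. \<ominus> x \<in> H)"
  show "additive_subgroup H R"
    apply (rule additive_subgroupI)
    apply (rule add.subgroupI)
    using h by (auto simp: a_inv_def)
qed

lemma sub_ops:
  shows "\<zero>\<^bsub>S\<lparr>carrier := A\<rparr>\<^esub> = \<zero>\<^bsub>S\<^esub>" "\<one>\<^bsub>S\<lparr>carrier := A\<rparr>\<^esub> = \<one>\<^bsub>S\<^esub>"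
   "x \<otimes>\<^bsub>S\<lparr>carrier := A\<rparr>\<^esub> y = x \<otimes>\<^bsub>S\<^esub> y" "x \<oplus>\<^bsub>S\<lparr>carrier := A\<rparr>\<^esub> y = x \<oplus>\<^bsub>S\<^esub> y"
   "carrier (S\<lparr>carrier := A\<rparr>) = A"
  by simp_all

definition sing_el :: "('a, 'b) ring_scheme \<Rightarrow> 'a \<Rightarrow> bool" where
  "sing_el R z \<longleftrightarrow> (\<forall>b\<in>carrier R. b \<noteq> \<zero>\<^bsub>R\<^esub> \<longrightarrow>
     (\<exists>d\<in>carrier R. d \<otimes>\<^bsub>R\<^esub> b \<noteq> \<zero>\<^bsub>R\<^esub> \<and> d \<otimes>\<^bsub>R\<^esub> b \<otimes>\<^bsub>R\<^esub> z = \<zero>\<^bsub>R\<^esub>))"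

definition nonsingular :: "('a, 'b) ring_scheme \<Rightarrow> bool" where
  "nonsingular R \<longleftrightarrow> (\<forall>z\<in>carrier R. sing_el R z \<longrightarrow> z = \<zero>\<^bsub>R\<^esub>)"

context ring begin

lemma left_ann_carrier: "left_ann R Y \<subseteq> carrier R"
  by (auto simp: left_ann_def)

lemma left_ann_addsub: assumes "Y \<subseteq> carrier R" shows "additive_subgroup (left_ann R Y) R"
  unfolding addsub_iff
proof (intro conjI ballI)
  show "left_ann R Y \<subseteq> carrier R" by (rule left_ann_carrier)
  show "\<zero> \<in> left_ann R Y" using assms by (auto simp: left_ann_def)
next
  fix x y assume "x \<in> left_ann R Y" "y \<in> left_ann R Y"
  then show "x \<oplus> y \<in> left_ann R Y" using assms by (auto simp: left_ann_def l_distr subset_eq)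
next
  fix x assume "x \<in> left_ann R Y"
  then show "\<ominus> x \<in> left_ann R Y" using assms by (auto simp: left_ann_def l_minus subset_eq)
qed

lemma left_ann_lmult: assumes "Y \<subseteq> carrier R" "t \<in> left_ann R Y" "s \<in> carrier R"
  shows "s \<otimes> t \<in> left_ann R Y"
  using assms by (auto simp: left_ann_def m_assoc subset_eq)

lemma acc_max:
  assumes acc: "acc_left_ann R" and P0: "P z0" and Pc: "\<And>z. P z \<Longrightarrow> z \<in> carrier R"
  shows "\<exists>z. P z \<and> (\<forall>z'. P z' \<and> left_ann R {z} \<subseteq> left_ann R {z'} \<longrightarrow> left_ann R {z'} = left_ann R {z})"
proof (rule ccontr)
  assume "\<not> ?thesis"
  hence ex: "\<forall>z. P z \<longrightarrow> (\<exists>z'. P z' \<and> left_ann R {z} \<subset> left_ann R {z'})" by blast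
  hence "\<forall>z. \<exists>z'. P z \<longrightarrow> P z' \<and> left_ann R {z} \<subset> left_ann R {z'}" by blast
  from choice[OF this] obtain g where g: "\<And>z. P z \<Longrightarrow> P (g z) \<and> left_ann R {z} \<subset> left_ann R {g z}" by blast
  define h where "h n = (g ^^ n) z0" for n
  have Ph: "P (h n)" for n by (induct n) (auto simp: h_def P0 g)
  have step: "left_ann R {h n} \<subset> left_ann R {h (Suc n)}" for n using g[OF Ph[of n]] by (simp add: h_def)
  define f where "f n = left_ann R {h n}" for n
  have hyp: "(\<forall>n. \<exists>Y. Y \<subseteq> carrier R \<and> f n = left_ann R Y) \<and> (\<forall>n. f n \<subseteq> f (Suc n))"
  proof (intro conjI allI)
    fix n
    show "\<exists>Y. Y \<subseteq> carrier R \<and> f n = left_ann R Y"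
      by (rule exI[of _ "{h n}"]) (simp add: f_def Pc[OF Ph])
    show "f n \<subseteq> f (Suc n)" using step[of n] unfolding f_def by (rule psubset_imp_subset)
  qed
  have "\<exists>m. \<forall>n\<ge>m. f n = f m" using acc[unfolded acc_left_ann_def, rule_format, OF hyp] .
  then obtain m where "\<forall>n\<ge>m. f n = f m" by blast
  moreover have "m \<le> Suc m" by simp
  ultimately have "f (Suc m) = f m" by blast
  with step[of m] show False unfolding f_def by simp
qed

lemma sing_rmult: assumes "sing_el R z" "z \<in> carrier R" "r \<in> carrier R" shows "sing_el R (z \<otimes> r)"
  unfolding sing_el_def
proof (intro ballI impI)
  fix b assume b: "b \<in> carrier R" "b \<noteq> \<zero>"
  then obtain d where d: "d \<in> carrier R" "d \<otimes> b \<noteq> \<zero>" "d \<otimes> b \<otimes> z = \<zero>"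
    using assms(1) unfolding sing_el_def by blast
  have "d \<otimes> b \<otimes> (z \<otimes> r) = (d \<otimes> b \<otimes> z) \<otimes> r" using d(1) b(1) assms(2,3) by (simp add: m_assoc)
  also have "\<dots> = \<zero>" using d(3) assms(3) by simp
  finally show "\<exists>d\<in>carrier R. d \<otimes> b \<noteq> \<zero> \<and> d \<otimes> b \<otimes> (z \<otimes> r) = \<zero>" using d by blast
qed

lemma semiprime_acc_nonsing:
  assumes sp: "semiprime_ring R" and acc: "acc_left_ann R" shows "nonsingular R"
proof (rule ccontr)
  assume "\<not> nonsingular R"
  then obtain z0 where z0: "z0 \<in> carrier R" "sing_el R z0" "z0 \<noteq> \<zero>" unfolding nonsingular_def by blast
  let ?P = "\<lambda>z. z \<in> carrier R \<and> sing_el R z \<and> z \<noteq> \<zero>"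
  obtain z where Pz: "?P z" and mx: "\<forall>z'. ?P z' \<and> left_ann R {z} \<subseteq> left_ann R {z'} \<longrightarrow> left_ann R {z'} = left_ann R {z}"
    using acc_max[OF acc, of ?P z0] z0 by blast
  have inc: "left_ann R {z} \<subseteq> left_ann R {z \<otimes> r}" if "r \<in> carrier R" for r
  proof
    fix t assume t: "t \<in> left_ann R {z}"
    then have tc: "t \<in> carrier R" "t \<otimes> z = \<zero>" by (auto simp: left_ann_def)
    have "t \<otimes> (z \<otimes> r) = (t \<otimes> z) \<otimes> r" using tc(1) Pz that by (simp add: m_assoc)
    also have "\<dots> = \<zero>" using tc that by simp
    finally show "t \<in> left_ann R {z \<otimes> r}" using tc by (simp add: left_ann_def)
  qed
  have "\<forall>r\<in>carrier R. z \<otimes> r \<otimes> z = \<zero>"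
  proof
    fix r assume r: "r \<in> carrier R"
    show "z \<otimes> r \<otimes> z = \<zero>"
    proof (cases "z \<otimes> r = \<zero>")
      case True then show ?thesis using Pz by simp
    next
      case False
      let ?w = "z \<otimes> r"
      have wc: "?w \<in> carrier R" using Pz r by simp
      have sw: "sing_el R ?w" using sing_rmult Pz r by blast
      have eqw: "left_ann R {?w} = left_ann R {z}" using mx inc[OF r] sw wc False by blast
      obtain d where d: "d \<in> carrier R" "d \<otimes> ?w \<noteq> \<zero>" "d \<otimes> ?w \<otimes> ?w = \<zero>"
        using sw wc False unfolding sing_el_def by blast
      have ww: "?w \<otimes> ?w = \<zero>"
      proof (rule ccontr)
        assume nz: "?w \<otimes> ?w \<noteq> \<zero>"
        have e1: "?w \<otimes> ?w = z \<otimes> (r \<otimes> ?w)" using Pz r by (simp add: m_assoc)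
        have rw: "r \<otimes> ?w \<in> carrier R" using Pz r by simp
        have "sing_el R (?w \<otimes> ?w)" unfolding e1 using sing_rmult Pz rw by blast
        moreover have "left_ann R {z} \<subseteq> left_ann R {?w \<otimes> ?w}" unfolding e1 using inc[OF rw] .
        ultimately have "left_ann R {?w \<otimes> ?w} = left_ann R {z}" using mx nz wc by blast
        moreover have "d \<in> left_ann R {?w \<otimes> ?w}" using d wc by (simp add: left_ann_def m_assoc)
        ultimately have "d \<in> left_ann R {?w}" using eqw by simp
        then show False using d by (simp add: left_ann_def)
      qed
      have "?w \<in> left_ann R {?w}" using ww wc by (simp add: left_ann_def)
      then have "?w \<in> left_ann R {z}" using eqw by simp
      then show ?thesis by (simp add: left_ann_def)
    qed
  qed
  then have "z = \<zero>" using sp Pz unfolding semiprime_ring_def by blast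
  then show False using Pz by simp
qed

end

context ring begin

lemma principal_left_ideal: assumes x: "x \<in> carrier R"
  shows "left_ideal {s \<otimes> x | s. s \<in> carrier R} R"
  unfolding left_ideal_def addsub_iff
proof (intro conjI ballI)
  show "{s \<otimes> x | s. s \<in> carrier R} \<subseteq> carrier R" using x by auto
  show "\<zero> \<in> {s \<otimes> x | s. s \<in> carrier R}" using x by (auto intro!: exI[of _ \<zero>])
next
  fix a b assume "a \<in> {s \<otimes> x | s. s \<in> carrier R}" "b \<in> {s \<otimes> x | s. s \<in> carrier R}"
  then obtain s t where st: "s \<in> carrier R" "t \<in> carrier R" "a = s \<otimes> x" "b = t \<otimes> x" by blast
  then have "a \<oplus> b = (s \<oplus> t) \<otimes> x" using x by (simp add: l_distr)
  then show "a \<oplus> b \<in> {s \<otimes> x | s. s \<in> carrier R}" using st by blast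
next
  fix a assume "a \<in> {s \<otimes> x | s. s \<in> carrier R}"
  then obtain s where st: "s \<in> carrier R" "a = s \<otimes> x" by blast
  then have "\<ominus> a = (\<ominus> s) \<otimes> x" using x by (simp add: l_minus)
  then show "\<ominus> a \<in> {s \<otimes> x | s. s \<in> carrier R}" using st by blast
next
  fix r a assume r: "r \<in> carrier R" and "a \<in> {s \<otimes> x | s. s \<in> carrier R}"
  then obtain s where st: "s \<in> carrier R" "a = s \<otimes> x" by blast
  then have "r \<otimes> a = (r \<otimes> s) \<otimes> x" using x r by (simp add: m_assoc)
  then show "r \<otimes> a \<in> {s \<otimes> x | s. s \<in> carrier R}" using st r by blast
qed

lemma finsum_lessThan_Suc: assumes "\<forall>i<Suc n. v i \<in> carrier R"
  shows "finsum R v {..<Suc n} = v n \<oplus> finsum R v {..<n}"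
  using assms by (subst lessThan_Suc, subst finsum_insert) (auto simp: Pi_def)

lemma finsum_in_addsub: fixes n :: nat assumes "additive_subgroup H R" "\<forall>i<n. v i \<in> H"
  shows "finsum R v {..<n} \<in> H"
  using assms(2)
proof (induct n)
  case 0 then show ?case using assms(1) by (simp add: additive_subgroup.zero_closed)
next
  case (Suc n)
  have Hc: "H \<subseteq> carrier R" using additive_subgroup.a_subset[OF assms(1)] .
  have vc: "\<forall>i<Suc n. v i \<in> carrier R" using Suc.prems Hc by blast
  have e: "finsum R v {..<Suc n} = v n \<oplus> finsum R v {..<n}" using finsum_lessThan_Suc[OF vc] .
  have h1: "v n \<in> H" using Suc.prems by simp
  have h2: "finsum R v {..<n} \<in> H" using Suc by simp
  show ?case unfolding e using additive_subgroup.a_closed[OF assms(1) h1 h2] .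
qed

lemma finsum_shift: assumes "\<forall>i<Suc n. v i \<in> carrier R"
  shows "finsum R v {..<Suc n} = v 0 \<oplus> finsum R (\<lambda>i. v (Suc i)) {..<n}"
  using assms
proof (induct n)
  case 0 then show ?case using finsum_lessThan_Suc[of 0 v] by simp
next
  case (Suc n)
  have "finsum R v {..<Suc (Suc n)} = v (Suc n) \<oplus> finsum R v {..<Suc n}"
    using Suc.prems by (rule finsum_lessThan_Suc)
  also have "\<dots> = v (Suc n) \<oplus> (v 0 \<oplus> finsum R (\<lambda>i. v (Suc i)) {..<n})"
    using Suc by simp
  also have "\<dots> = v 0 \<oplus> (v (Suc n) \<oplus> finsum R (\<lambda>i. v (Suc i)) {..<n})"
    using Suc.prems by (intro a_lcomm) (auto intro!: finsum_closed simp: Pi_def)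
  also have "\<dots> = v 0 \<oplus> finsum R (\<lambda>i. v (Suc i)) {..<Suc n}"
    using Suc.prems by (subst finsum_lessThan_Suc[of n "\<lambda>i. v (Suc i)"]) auto
  finally show ?case .
qed

lemma nonsing_udim_acc:
  assumes ns: "nonsingular R" and ud: "finite_left_udim R" shows "acc_left_ann R"
  unfolding acc_left_ann_def
proof (intro allI impI, rule ccontr)
  fix f :: "nat \<Rightarrow> 'a set"
  assume hf: "(\<forall>n. \<exists>Y. Y \<subseteq> carrier R \<and> f n = left_ann R Y) \<and> (\<forall>n. f n \<subseteq> f (Suc n))"
    and nst: "\<not> (\<exists>m. \<forall>n\<ge>m. f n = f m)"
  from hf have "\<forall>n. \<exists>Y. Y \<subseteq> carrier R \<and> f n = left_ann R Y" by blast
  from choice[OF this] obtain Y where Y: "\<And>n. Y n \<subseteq> carrier R" "\<And>n. f n = left_ann R (Y n)" by blast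
  have fS: "\<And>n. f n \<subseteq> f (Suc n)" using hf by blast
  have mono: "f m \<subseteq> f n" if "m \<le> n" for m n
    using lift_Suc_mono_le[of f, OF fS that] .
  have "\<forall>m. \<exists>n. m < n \<and> f m \<subset> f n"
  proof
    fix m
    obtain n where "n \<ge> m" "f n \<noteq> f m" using nst by blast
    then show "\<exists>n. m < n \<and> f m \<subset> f n" using mono[of m n] by (intro exI[of _ n]) (auto simp: le_less)
  qed
  from choice[OF this] obtain nx where nx: "\<And>m. m < nx m \<and> f m \<subset> f (nx m)" by blast
  define g where "g k = (nx ^^ k) 0" for k
  have gS: "g (Suc k) = nx (g k)" for k by (simp add: g_def)
  have gmono: "g i \<le> g j" if "i \<le> j" for i j
  proof -
    have gs: "\<And>k. g k \<le> g (Suc k)" unfolding gS using nx less_imp_le by blast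
    show ?thesis using lift_Suc_mono_le[of g, OF gs that] .
  qed
  have key: "\<exists>x. x \<in> f (g (Suc k)) \<and> x \<noteq> \<zero> \<and> (\<forall>s\<in>carrier R. s \<otimes> x \<in> f (g k) \<longrightarrow> s \<otimes> x = \<zero>)" for k
  proof -
    let ?m = "g k"
    have "f (g k) \<subset> f (g (Suc k))" using nx[of "g k"] by (simp add: gS)
    then obtain x0 where x0: "x0 \<in> f (g (Suc k))" "x0 \<notin> f ?m" by blast
    have x0c: "x0 \<in> carrier R" using x0(1) Y(2) left_ann_carrier by blast
    obtain y where y: "y \<in> Y ?m" "x0 \<otimes> y \<noteq> \<zero>" using x0 x0c Y(2)[of ?m] by (auto simp: left_ann_def)
    have yc: "y \<in> carrier R" using y Y(1) by blast
    have "\<not> sing_el R (x0 \<otimes> y)" using ns y x0c yc unfolding nonsingular_def by auto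
    then obtain b where b: "b \<in> carrier R" "b \<noteq> \<zero>"
      "\<And>d. d \<in> carrier R \<Longrightarrow> d \<otimes> b \<noteq> \<zero> \<Longrightarrow> d \<otimes> b \<otimes> (x0 \<otimes> y) \<noteq> \<zero>"
      unfolding sing_el_def by blast
    let ?x = "b \<otimes> x0"
    have xin: "?x \<in> f (g (Suc k))" using left_ann_lmult[OF Y(1) _ b(1)] x0(1) Y(2) by metis
    have "b \<otimes> (x0 \<otimes> y) \<noteq> \<zero>" using b(3)[of \<one>] b by simp
    then have xnz: "?x \<noteq> \<zero>" using b x0c yc by (auto simp: m_assoc[symmetric])
    have "s \<otimes> ?x = \<zero>" if s: "s \<in> carrier R" "s \<otimes> ?x \<in> f ?m" for s
    proof -
      have "s \<otimes> ?x \<otimes> y = \<zero>" using s(2) y(1) Y(2)[of ?m] by (auto simp: left_ann_def)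
      moreover have "s \<otimes> ?x \<otimes> y = s \<otimes> b \<otimes> (x0 \<otimes> y)" using s b x0c yc by (simp add: m_assoc)
      ultimately have "s \<otimes> b = \<zero>" using b(3)[of "s \<otimes> b"] s b by auto
      then show ?thesis using s b x0c by (simp add: m_assoc[symmetric])
    qed
    then show ?thesis using xin xnz by blast
  qed
  have "\<forall>k. \<exists>x. x \<in> f (g (Suc k)) \<and> x \<noteq> \<zero> \<and> (\<forall>s\<in>carrier R. s \<otimes> x \<in> f (g k) \<longrightarrow> s \<otimes> x = \<zero>)"
    using key by blast
  from choice[OF this] obtain x where
    x: "\<And>k. x k \<in> f (g (Suc k))" "\<And>k. x k \<noteq> \<zero>" "\<And>k s. s \<in> carrier R \<Longrightarrow> s \<otimes> x k \<in> f (g k) \<Longrightarrow> s \<otimes> x k = \<zero>"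
    by blast
  have xc: "x k \<in> carrier R" for k using x(1) Y(2) left_ann_carrier by blast
  define K where "K k = {s \<otimes> x k | s. s \<in> carrier R}" for k
  have Kid: "left_ideal (K k) R" for k unfolding K_def by (rule principal_left_ideal[OF xc])
  have Knz: "K k \<noteq> {\<zero>}" for k
  proof
    assume "K k = {\<zero>}"
    moreover have "\<one> \<otimes> x k \<in> K k" unfolding K_def by blast
    ultimately show False using x(2)[of k] xc[of k] by simp
  qed
  have Kc: "K k \<subseteq> carrier R" for k unfolding K_def using xc by auto
  have Kf: "K i \<subseteq> f (g n)" if "i < n" for i n
  proof
    fix v assume "v \<in> K i"
    then obtain s where s: "s \<in> carrier R" "v = s \<otimes> x i" unfolding K_def by blast
    have "v \<in> f (g (Suc i))" using left_ann_lmult[OF Y(1) _ s(1)] x(1)[of i] Y(2) s(2) by metis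
    moreover have "f (g (Suc i)) \<subseteq> f (g n)" using that by (intro mono gmono) simp
    ultimately show "v \<in> f (g n)" by blast
  qed
  have indep: "\<forall>v. (\<forall>i<n. v i \<in> K i) \<and> finsum R v {..<n} = \<zero> \<longrightarrow> (\<forall>i<n. v i = \<zero>)" for n
  proof (induct n)
    case 0 then show ?case by simp
  next
    case (Suc n)
    show ?case
    proof (rule allI, rule impI)
      fix v assume hv: "(\<forall>i<Suc n. v i \<in> K i) \<and> finsum R v {..<Suc n} = \<zero>"
      have vc: "\<forall>i<Suc n. v i \<in> carrier R" using hv Kc by blast
      have sumc: "finsum R v {..<n} \<in> carrier R" using vc by (intro finsum_closed) (auto simp: Pi_def)
      have e: "v n \<oplus> finsum R v {..<n} = \<zero>" using hv finsum_lessThan_Suc[OF vc] by simp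
      have addf: "additive_subgroup (f (g n)) R" using left_ann_addsub[OF Y(1)] Y(2) by metis
      have "finsum R v {..<n} \<in> f (g n)"
      proof (intro finsum_in_addsub[OF addf] allI impI)
        fix i assume i: "i < n"
        then have "v i \<in> K i" using hv by simp
        then show "v i \<in> f (g n)" using Kf[OF i] by blast
      qed
      then have "\<ominus> finsum R v {..<n} \<in> f (g n)" by (rule additive_subgroup.a_inv_closed[OF addf])
      moreover have "\<ominus> finsum R v {..<n} = v n" using minus_equality[OF e sumc] vc by simp
      ultimately have vn: "v n \<in> f (g n)" by simp
      have "v n \<in> K n" using hv by simp
      then obtain s where s: "s \<in> carrier R" "v n = s \<otimes> x n" unfolding K_def by blast
      have vn0: "v n = \<zero>" using x(3)[OF s(1)] vn s(2) by simp
      then have s0: "finsum R v {..<n} = \<zero>" using e sumc by simp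
      have "\<forall>i<n. v i \<in> K i" using hv by simp
      then have "\<forall>i<n. v i = \<zero>" using Suc.hyps[rule_format, of v] s0 by blast
      then show "\<forall>i<Suc n. v i = \<zero>" using vn0 by (auto simp: less_Suc_eq)
    qed
  qed
  obtain N where N: "\<And>n I. (\<forall>i<n. left_ideal (I i) R \<and> I i \<noteq> {\<zero>}) \<and> independent_family R n I \<Longrightarrow> n \<le> N"
    using ud unfolding finite_left_udim_def by blast
  have "Suc N \<le> N" using Kid Knz indep[of "Suc N"] by (intro N[of "Suc N" K]) (simp add: independent_family_def)
  then show False by simp
qed

end

context ring begin

lemma ess_mult:
  assumes ud: "finite_left_udim R" and c: "c \<in> carrier R"
    and lreg: "\<And>t. t \<in> carrier R \<Longrightarrow> t \<otimes> c = \<zero> \<Longrightarrow> t = \<zero>"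
    and L: "additive_subgroup L R" "\<And>s t. s \<in> carrier R \<Longrightarrow> t \<in> L \<Longrightarrow> s \<otimes> t \<in> L"
      "\<And>t. t \<in> L \<Longrightarrow> t \<otimes> c \<in> L"
    and t: "t \<in> L" "t \<noteq> \<zero>"
  shows "\<exists>u\<in>carrier R. u \<otimes> t \<noteq> \<zero> \<and> (\<exists>t'\<in>L. u \<otimes> t = t' \<otimes> c)"
proof (rule ccontr)
  assume nt: "\<not> ?thesis"
  have nt': "u \<otimes> t = \<zero>" if "u \<in> carrier R" "t' \<in> L" "u \<otimes> t = t' \<otimes> c" for u t'
    using nt that by blast
  have Lc: "L \<subseteq> carrier R" using additive_subgroup.a_subset[OF L(1)] .
  have tc: "t \<in> carrier R" using t Lc by blast
  define p where "p i = t \<otimes> c [^] (i::nat)" for i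
  have pS: "p (Suc i) = p i \<otimes> c" for i using tc c by (simp add: p_def nat_pow_Suc m_assoc)
  have p0: "p 0 = t" using tc by (simp add: p_def)
  have pL: "p i \<in> L" for i
  proof (induct i)
    case 0 then show ?case using p0 t by simp
  next
    case (Suc i) then show ?case using pS L(3) by simp
  qed
  have pc: "p i \<in> carrier R" for i using pL Lc by blast
  have pnz: "p i \<noteq> \<zero>" for i
  proof (induct i)
    case 0 then show ?case using p0 t by simp
  next
    case (Suc i) then show ?case using pS lreg pc by metis
  qed
  define K where "K i = {s \<otimes> p i | s. s \<in> carrier R}" for i
  have Kid: "left_ideal (K i) R" for i unfolding K_def by (rule principal_left_ideal[OF pc])
  have Knz: "K i \<noteq> {\<zero>}" for i
  proof
    assume "K i = {\<zero>}"
    moreover have "\<one> \<otimes> p i \<in> K i" unfolding K_def by blast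
    ultimately show False using pnz[of i] pc[of i] by simp
  qed
  have KL: "K i \<subseteq> L" for i unfolding K_def using L(2) pL by blast
  have Kc: "K i \<subseteq> carrier R" for i using KL Lc by blast
  have indep: "\<forall>v. (\<forall>i<n. v i \<in> K i) \<and> finsum R v {..<n} = \<zero> \<longrightarrow> (\<forall>i<n. v i = \<zero>)" for n
  proof (induct n)
    case 0 then show ?case by simp
  next
    case (Suc n)
    show ?case
    proof (rule allI, rule impI)
      fix v assume hv: "(\<forall>i<Suc n. v i \<in> K i) \<and> finsum R v {..<Suc n} = \<zero>"
      have vc: "\<forall>i<Suc n. v i \<in> carrier R" using hv Kc by blast
      have "\<forall>i. \<exists>w. i < n \<longrightarrow> w \<in> K i \<and> v (Suc i) = w \<otimes> c"
      proof (intro allI)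
        fix i
        show "\<exists>w. i < n \<longrightarrow> w \<in> K i \<and> v (Suc i) = w \<otimes> c"
        proof (cases "i < n")
          case True
          then have "v (Suc i) \<in> K (Suc i)" using hv by simp
          then obtain s where s: "s \<in> carrier R" "v (Suc i) = s \<otimes> p (Suc i)" unfolding K_def by blast
          have "v (Suc i) = (s \<otimes> p i) \<otimes> c" using s pS pc c by (simp add: m_assoc)
          moreover have "s \<otimes> p i \<in> K i" using s unfolding K_def by blast
          ultimately show ?thesis by blast
        qed simp
      qed
      from choice[OF this] obtain w where w: "\<And>i. i < n \<Longrightarrow> w i \<in> K i \<and> v (Suc i) = w i \<otimes> c" by blast
      have wc: "w \<in> {..<n} \<rightarrow> carrier R" using w Kc by blast
      have vsc: "(\<lambda>i. v (Suc i)) \<in> {..<n} \<rightarrow> carrier R" using vc by auto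
      let ?W = "finsum R w {..<n}"
      have Wc: "?W \<in> carrier R" using wc by (rule finsum_closed)
      have WL: "?W \<in> L"
      proof (intro finsum_in_addsub[OF L(1)] allI impI)
        fix i assume i: "i < n" then show "w i \<in> L" using w[OF i] KL by blast
      qed
      have "finsum R (\<lambda>i. v (Suc i)) {..<n} = finsum R (\<lambda>i. w i \<otimes> c) {..<n}"
        using w wc c by (intro finsum_cong') auto
      also have "\<dots> = ?W \<otimes> c" using finsum_ldistr[of "{..<n}" c w] wc c by simp
      finally have e1: "finsum R (\<lambda>i. v (Suc i)) {..<n} = ?W \<otimes> c" .
      have e: "v 0 \<oplus> ?W \<otimes> c = \<zero>" using hv finsum_shift[OF vc] e1 by simp
      have v0c: "v 0 \<in> carrier R" using vc by simp
      have WCc: "?W \<otimes> c \<in> carrier R" using Wc c by simp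
      have "v 0 = \<ominus> (?W \<otimes> c)"
        using minus_equality[OF e WCc v0c] by simp
      also have "\<dots> = (\<ominus> ?W) \<otimes> c" using Wc c by (simp add: l_minus)
      finally have v0e: "v 0 = (\<ominus> ?W) \<otimes> c" .
      have "v 0 \<in> K 0" using hv by simp
      then obtain s where s: "s \<in> carrier R" "v 0 = s \<otimes> t" unfolding K_def using p0 by blast
      have nWL: "\<ominus> ?W \<in> L" by (rule additive_subgroup.a_inv_closed[OF L(1) WL])
      have v00: "v 0 = \<zero>" using nt'[OF s(1) nWL] s(2) v0e by simp
      then have "?W \<otimes> c = \<zero>" using e WCc by simp
      then have W0: "?W = \<zero>" using lreg Wc by blast
      have "\<forall>i<n. w i \<in> K i" using w by blast
      then have "\<forall>i<n. w i = \<zero>" using Suc.hyps[rule_format, of w] W0 by blast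
      then have "\<forall>i<n. v (Suc i) = \<zero>" using w c by simp
      then show "\<forall>i<Suc n. v i = \<zero>" using v00 by (auto simp: less_Suc_eq_0_disj)
    qed
  qed
  obtain N where N: "\<And>n I. (\<forall>i<n. left_ideal (I i) R \<and> I i \<noteq> {\<zero>}) \<and> independent_family R n I \<Longrightarrow> n \<le> N"
    using ud unfolding finite_left_udim_def by blast
  have "Suc N \<le> N" using Kid Knz indep[of "Suc N"] by (intro N[of "Suc N" K]) (simp add: independent_family_def)
  then show False by simp
qed

lemma strong_lemma:
  assumes ud: "finite_left_udim R" and ns: "nonsingular R" and B: "B \<subseteq> carrier R"
    and Bm: "\<And>x y. x \<in> B \<Longrightarrow> y \<in> B \<Longrightarrow> x \<otimes> y \<in> B"
    and strong: "\<And>x. x \<in> carrier R \<Longrightarrow> \<exists>c. c \<in> B \<and> (\<forall>t\<in>carrier R. t \<otimes> c = \<zero> \<longrightarrow> t = \<zero>) \<and> c \<otimes> x \<in> B"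
    and b: "b \<in> carrier R" and t: "t \<in> carrier R" and tb: "\<forall>r\<in>B. t \<otimes> r \<otimes> b = \<zero>"
    and s: "s \<in> carrier R"
  shows "t \<otimes> s \<otimes> b = \<zero>"
proof -
  define L where "L = {t\<in>carrier R. \<forall>r\<in>B. t \<otimes> r \<otimes> b = \<zero>}"
  have Ladd: "additive_subgroup L R"
    unfolding addsub_iff
  proof (intro conjI ballI)
    show "L \<subseteq> carrier R" unfolding L_def by blast
    show "\<zero> \<in> L" unfolding L_def using B b by auto
  next
    fix x y assume "x \<in> L" "y \<in> L"
    then have x: "x \<in> carrier R" "\<forall>r\<in>B. x \<otimes> r \<otimes> b = \<zero>" and y: "y \<in> carrier R" "\<forall>r\<in>B. y \<otimes> r \<otimes> b = \<zero>"
      unfolding L_def by auto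
    have "(x \<oplus> y) \<otimes> r \<otimes> b = \<zero>" if r: "r \<in> B" for r
    proof -
      have rc: "r \<in> carrier R" using r B by blast
      have "(x \<oplus> y) \<otimes> r \<otimes> b = x \<otimes> r \<otimes> b \<oplus> y \<otimes> r \<otimes> b" using x(1) y(1) rc b by (simp add: l_distr)
      then show ?thesis using x(2) y(2) r by simp
    qed
    then show "x \<oplus> y \<in> L" unfolding L_def using x y by auto
  next
    fix x assume "x \<in> L"
    then have x: "x \<in> carrier R" "\<forall>r\<in>B. x \<otimes> r \<otimes> b = \<zero>" unfolding L_def by auto
    have "(\<ominus> x) \<otimes> r \<otimes> b = \<zero>" if r: "r \<in> B" for r
    proof -
      have rc: "r \<in> carrier R" using r B by blast
      have "(\<ominus> x) \<otimes> r \<otimes> b = \<ominus> (x \<otimes> r \<otimes> b)" using x(1) rc b by (simp add: l_minus)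
      then show ?thesis using x(2) r by simp
    qed
    then show "\<ominus> x \<in> L" unfolding L_def using x by auto
  qed
  have Lmul: "u \<otimes> x \<in> L" if u: "u \<in> carrier R" and x: "x \<in> L" for u x
  proof -
    have xc: "x \<in> carrier R" "\<forall>r\<in>B. x \<otimes> r \<otimes> b = \<zero>" using x unfolding L_def by auto
    have "u \<otimes> x \<otimes> r \<otimes> b = \<zero>" if r: "r \<in> B" for r
    proof -
      have rc: "r \<in> carrier R" using r B by blast
      have "u \<otimes> x \<otimes> r \<otimes> b = u \<otimes> (x \<otimes> r \<otimes> b)" using u xc(1) rc b by (simp add: m_assoc)
      then show ?thesis using xc(2) r u by simp
    qed
    then show ?thesis unfolding L_def using u xc by auto
  qed
  obtain c where c: "c \<in> B" "\<forall>t\<in>carrier R. t \<otimes> c = \<zero> \<longrightarrow> t = \<zero>" "c \<otimes> s \<in> B"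
    using strong[OF s] by blast
  have cc: "c \<in> carrier R" using c B by blast
  have Lc: "x \<otimes> c \<in> L" if x: "x \<in> L" for x
  proof -
    have xc: "x \<in> carrier R" "\<forall>r\<in>B. x \<otimes> r \<otimes> b = \<zero>" using x unfolding L_def by auto
    have "x \<otimes> c \<otimes> r \<otimes> b = \<zero>" if r: "r \<in> B" for r
    proof -
      have rc: "r \<in> carrier R" using r B by blast
      have "x \<otimes> c \<otimes> r \<otimes> b = x \<otimes> (c \<otimes> r) \<otimes> b" using xc(1) cc rc b by (simp add: m_assoc)
      moreover have "c \<otimes> r \<in> B" using Bm c(1) r by blast
      ultimately show ?thesis using xc(2) by simp
    qed
    then show ?thesis unfolding L_def using xc cc by auto
  qed
  have tL: "t \<in> L" unfolding L_def using t tb by blast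
  let ?x = "t \<otimes> s \<otimes> b"
  have xc: "?x \<in> carrier R" using t s b by simp
  have "sing_el R ?x"
    unfolding sing_el_def
  proof (intro ballI impI)
    fix b' assume b': "b' \<in> carrier R" "b' \<noteq> \<zero>"
    show "\<exists>d\<in>carrier R. d \<otimes> b' \<noteq> \<zero> \<and> d \<otimes> b' \<otimes> ?x = \<zero>"
    proof (cases "b' \<otimes> t = \<zero>")
      case True
      have "\<one> \<otimes> b' \<otimes> ?x = (b' \<otimes> t) \<otimes> s \<otimes> b" using b' t s b by (simp add: m_assoc)
      then have "\<one> \<otimes> b' \<otimes> ?x = \<zero>" using True s b by simp
      then show ?thesis using b' by (intro bexI[of _ \<one>]) auto
    next
      case False
      have btL: "b' \<otimes> t \<in> L" using Lmul b'(1) tL by blast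
      obtain u t' where u: "u \<in> carrier R" "u \<otimes> (b' \<otimes> t) \<noteq> \<zero>" "t' \<in> L" "u \<otimes> (b' \<otimes> t) = t' \<otimes> c"
        using ess_mult[OF ud cc _ Ladd Lmul Lc btL False] c(2) by blast
      have t'c: "t' \<in> carrier R" "\<forall>r\<in>B. t' \<otimes> r \<otimes> b = \<zero>" using u(3) unfolding L_def by auto
      have "u \<otimes> b' \<noteq> \<zero>"
      proof
        assume "u \<otimes> b' = \<zero>"
        then have "u \<otimes> b' \<otimes> t = \<zero>" using t by simp
        then show False using u(2) u(1) b'(1) t by (simp add: m_assoc)
      qed
      moreover have "u \<otimes> b' \<otimes> ?x = (u \<otimes> (b' \<otimes> t)) \<otimes> s \<otimes> b" using u(1) b'(1) t s b by (simp add: m_assoc)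
      moreover have "(t' \<otimes> c) \<otimes> s \<otimes> b = t' \<otimes> (c \<otimes> s) \<otimes> b" using t'c(1) cc s b by (simp add: m_assoc)
      moreover have "t' \<otimes> (c \<otimes> s) \<otimes> b = \<zero>" using t'c(2) c(3) by blast
      ultimately show ?thesis using u(1,4) by metis
    qed
  qed
  then show ?thesis using ns xc unfolding nonsingular_def by blast
qed

end

inductive_set gen_li :: "('a, 'b) ring_scheme \<Rightarrow> 'a set \<Rightarrow> 'a set" for S I where
  gen_zero: "\<zero>\<^bsub>S\<^esub> \<in> gen_li S I"
| gen_step: "s \<in> carrier S \<Longrightarrow> x \<in> I \<Longrightarrow> y \<in> gen_li S I \<Longrightarrow> s \<otimes>\<^bsub>S\<^esub> x \<oplus>\<^bsub>S\<^esub> y \<in> gen_li S I"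

context ring begin

lemma gen_carrier: assumes "I \<subseteq> carrier R" "y \<in> gen_li R I" shows "y \<in> carrier R"
  using assms(2) by induct (use assms(1) in auto)

lemma gen_add: assumes I: "I \<subseteq> carrier R" and y: "y \<in> gen_li R I" and z: "z \<in> gen_li R I"
  shows "y \<oplus> z \<in> gen_li R I"
  using y
proof induct
  case gen_zero then show ?case using z gen_carrier[OF I z] by simp
next
  case (gen_step s x y)
  have "s \<otimes> x \<oplus> y \<oplus> z = s \<otimes> x \<oplus> (y \<oplus> z)"
    using gen_step I gen_carrier[OF I] z by (simp add: a_assoc subset_eq)
  then show ?case using gen_step gen_li.gen_step by simp
qed

lemma gen_neg: assumes I: "I \<subseteq> carrier R" and y: "y \<in> gen_li R I"
  shows "\<ominus> y \<in> gen_li R I"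
  using y
proof induct
  case gen_zero then show ?case by (simp add: gen_li.gen_zero)
next
  case (gen_step s x y)
  have xc: "x \<in> carrier R" using gen_step I by blast
  have yc: "y \<in> carrier R" using gen_step gen_carrier[OF I] by blast
  have "\<ominus> (s \<otimes> x \<oplus> y) = (\<ominus> s) \<otimes> x \<oplus> \<ominus> y"
    using gen_step xc yc by (simp add: minus_add l_minus)
  moreover have "(\<ominus> s) \<otimes> x \<oplus> \<ominus> y \<in> gen_li R I"
    by (rule gen_li.gen_step) (use gen_step in auto)
  ultimately show ?case by simp
qed

lemma gen_lmul: assumes I: "I \<subseteq> carrier R" and y: "y \<in> gen_li R I" and r: "r \<in> carrier R"
  shows "r \<otimes> y \<in> gen_li R I"
  using y
proof induct
  case gen_zero then show ?case using r by (simp add: gen_li.gen_zero)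
next
  case (gen_step s x y)
  have xc: "x \<in> carrier R" using gen_step I by blast
  have yc: "y \<in> carrier R" using gen_step gen_carrier[OF I] by blast
  have "r \<otimes> (s \<otimes> x \<oplus> y) = (r \<otimes> s) \<otimes> x \<oplus> r \<otimes> y"
    using gen_step xc yc r by (simp add: r_distr m_assoc)
  moreover have "(r \<otimes> s) \<otimes> x \<oplus> r \<otimes> y \<in> gen_li R I"
    by (rule gen_li.gen_step) (use gen_step r in auto)
  ultimately show ?case by simp
qed

lemma gen_incl: assumes I: "I \<subseteq> carrier R" and x: "x \<in> I" shows "x \<in> gen_li R I"
proof -
  have "\<one> \<otimes> x \<oplus> \<zero> \<in> gen_li R I" using x by (intro gen_li.gen_step gen_li.gen_zero) auto
  then show ?thesis using x I by auto
qed

lemma gen_left_ideal: assumes I: "I \<subseteq> carrier R" shows "left_ideal (gen_li R I) R"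
  unfolding left_ideal_def addsub_iff
  using gen_carrier[OF I] gen_add[OF I] gen_neg[OF I] gen_lmul[OF I] gen_li.gen_zero by blast

lemma sub_neg: assumes A: "subring A R" and x: "x \<in> A"
  shows "\<ominus>\<^bsub>R\<lparr>carrier := A\<rparr>\<^esub> x = \<ominus> x"
proof -
  interpret A: ring "R\<lparr>carrier := A\<rparr>" using subring_is_ring[OF A] .
  have "\<ominus>\<^bsub>R\<lparr>carrier := A\<rparr>\<^esub> x \<oplus>\<^bsub>R\<lparr>carrier := A\<rparr>\<^esub> x = \<zero>\<^bsub>R\<lparr>carrier := A\<rparr>\<^esub>"
    using x by (intro A.l_neg) simp
  then have e: "\<ominus>\<^bsub>R\<lparr>carrier := A\<rparr>\<^esub> x \<oplus> x = \<zero>" by simp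
  have "\<ominus>\<^bsub>R\<lparr>carrier := A\<rparr>\<^esub> x \<in> A" using x A.a_inv_closed[of x] by simp
  then have "\<ominus> x = \<ominus>\<^bsub>R\<lparr>carrier := A\<rparr>\<^esub> x" using minus_equality[OF e] x subringE(1)[OF A] by blast
  then show ?thesis by simp
qed

lemma sub_finsum: fixes n :: nat assumes A: "subring A R" and f: "\<forall>i<n. f i \<in> A"
  shows "finsum (R\<lparr>carrier := A\<rparr>) f {..<n} = finsum R f {..<n}"
  using f
proof (induct n)
  case 0
  interpret A: ring "R\<lparr>carrier := A\<rparr>" using subring_is_ring[OF A] .
  show ?case by simp
next
  case (Suc n)
  interpret A: ring "R\<lparr>carrier := A\<rparr>" using subring_is_ring[OF A] .
  have fA: "\<forall>i<Suc n. f i \<in> carrier (R\<lparr>carrier := A\<rparr>)" using Suc.prems by simp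
  have fR: "\<forall>i<Suc n. f i \<in> carrier R" using Suc.prems subringE(1)[OF A] by blast
  show ?case using A.finsum_lessThan_Suc[OF fA] finsum_lessThan_Suc[OF fR] Suc by simp
qed

lemma sub_left_ideal_iff: assumes A: "subring A R"
  shows "left_ideal I (R\<lparr>carrier := A\<rparr>) \<longleftrightarrow> I \<subseteq> A \<and> \<zero> \<in> I \<and> (\<forall>x\<in>I. \<forall>y\<in>I. x \<oplus> y \<in> I)
     \<and> (\<forall>x\<in>I. \<ominus> x \<in> I) \<and> (\<forall>r\<in>A. \<forall>x\<in>I. r \<otimes> x \<in> I)"
proof -
  interpret A: ring "R\<lparr>carrier := A\<rparr>" using subring_is_ring[OF A] .
  have eq: "(\<forall>x\<in>I. \<ominus>\<^bsub>R\<lparr>carrier := A\<rparr>\<^esub> x \<in> I) = (\<forall>x\<in>I. \<ominus> x \<in> I)" if "I \<subseteq> A"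
  proof -
    have "\<And>x. x \<in> I \<Longrightarrow> \<ominus>\<^bsub>R\<lparr>carrier := A\<rparr>\<^esub> x = \<ominus> x" using sub_neg[OF A] that by blast
    then show ?thesis by simp
  qed
  show ?thesis unfolding left_ideal_def A.addsub_iff using eq by auto
qed

lemma ne_single: assumes "nicely_essential A R" "x \<in> carrier R" "x \<noteq> \<zero>"
  shows "\<exists>a\<in>A. a \<otimes> x \<noteq> \<zero> \<and> a \<otimes> x \<in> A"
  using assms unfolding nicely_essential_def
  by (elim conjE allE[of _ "{x}"]) auto

lemma ne_pair: assumes "nicely_essential A R" "x \<in> carrier R" "x \<noteq> \<zero>" "y \<in> carrier R" "y \<noteq> \<zero>"
  shows "\<exists>a\<in>A. a \<otimes> x \<noteq> \<zero> \<and> a \<otimes> x \<in> A \<and> a \<otimes> y \<noteq> \<zero> \<and> a \<otimes> y \<in> A"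
  using assms unfolding nicely_essential_def
  by (elim conjE allE[of _ "{x, y}"]) auto

end

context ring begin

lemma ne_subring: "nicely_essential A R \<Longrightarrow> subring A R"
  unfolding nicely_essential_def by blast

lemma prime_up: assumes ne: "nicely_essential A R" and pA: "prime_ring (R\<lparr>carrier := A\<rparr>)"
  shows "prime_ring R"
proof -
  have A: "subring A R" using ne_subring[OF ne] .
  have Ac: "A \<subseteq> carrier R" using subringE(1)[OF A] .
  from pA have one: "\<one> \<noteq> \<zero>" and pr: "\<And>a b. a\<in>A \<Longrightarrow> b\<in>A \<Longrightarrow> (\<forall>r\<in>A. a \<otimes> r \<otimes> b = \<zero>) \<Longrightarrow> a = \<zero> \<or> b = \<zero>"
    unfolding prime_ring_def by auto
  show ?thesis unfolding prime_ring_def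
  proof (intro conjI ballI impI)
    show "\<one> \<noteq> \<zero>" by (rule one)
    fix a b assume a: "a \<in> carrier R" and b: "b \<in> carrier R" and h: "\<forall>r\<in>carrier R. a \<otimes> r \<otimes> b = \<zero>"
    show "a = \<zero> \<or> b = \<zero>"
    proof (rule ccontr)
      assume "\<not> (a = \<zero> \<or> b = \<zero>)"
      then have a0: "a \<noteq> \<zero>" and b0: "b \<noteq> \<zero>" by auto
      obtain a1 where a1: "a1 \<in> A" "a1 \<otimes> a \<noteq> \<zero>" "a1 \<otimes> a \<in> A" using ne_single[OF ne a a0] by blast
      obtain b1 where b1: "b1 \<in> A" "b1 \<otimes> b \<noteq> \<zero>" "b1 \<otimes> b \<in> A" using ne_single[OF ne b b0] by blast
      have "\<forall>r\<in>A. (a1 \<otimes> a) \<otimes> r \<otimes> (b1 \<otimes> b) = \<zero>"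
      proof
        fix r assume r: "r \<in> A"
        have rc: "r \<in> carrier R" "a1 \<in> carrier R" "b1 \<in> carrier R" using r a1 b1 Ac by auto
        have "(a1 \<otimes> a) \<otimes> r \<otimes> (b1 \<otimes> b) = a1 \<otimes> (a \<otimes> (r \<otimes> b1) \<otimes> b)"
          using rc a b by (simp add: m_assoc)
        also have "\<dots> = \<zero>" using h rc by simp
        finally show "(a1 \<otimes> a) \<otimes> r \<otimes> (b1 \<otimes> b) = \<zero>" .
      qed
      then show False using pr[OF a1(3) b1(3)] a1 b1 by blast
    qed
  qed
qed

lemma semiprime_up: assumes ne: "nicely_essential A R" and pA: "semiprime_ring (R\<lparr>carrier := A\<rparr>)"
  shows "semiprime_ring R"
proof -
  have A: "subring A R" using ne_subring[OF ne] .
  have Ac: "A \<subseteq> carrier R" using subringE(1)[OF A] .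
  from pA have pr: "\<And>a. a\<in>A \<Longrightarrow> (\<forall>r\<in>A. a \<otimes> r \<otimes> a = \<zero>) \<Longrightarrow> a = \<zero>"
    unfolding semiprime_ring_def by auto
  show ?thesis unfolding semiprime_ring_def
  proof (intro ballI impI)
    fix a assume a: "a \<in> carrier R" and h: "\<forall>r\<in>carrier R. a \<otimes> r \<otimes> a = \<zero>"
    show "a = \<zero>"
    proof (rule ccontr)
      assume a0: "a \<noteq> \<zero>"
      obtain a1 where a1: "a1 \<in> A" "a1 \<otimes> a \<noteq> \<zero>" "a1 \<otimes> a \<in> A" using ne_single[OF ne a a0] by blast
      have "\<forall>r\<in>A. (a1 \<otimes> a) \<otimes> r \<otimes> (a1 \<otimes> a) = \<zero>"
      proof
        fix r assume r: "r \<in> A"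
        have rc: "r \<in> carrier R" "a1 \<in> carrier R" using r a1 Ac by auto
        have "(a1 \<otimes> a) \<otimes> r \<otimes> (a1 \<otimes> a) = a1 \<otimes> (a \<otimes> (r \<otimes> a1) \<otimes> a)"
          using rc a by (simp add: m_assoc)
        also have "\<dots> = \<zero>" using h rc by simp
        finally show "(a1 \<otimes> a) \<otimes> r \<otimes> (a1 \<otimes> a) = \<zero>" .
      qed
      then show False using pr[OF a1(3)] a1 by blast
    qed
  qed
qed

lemma prime_imp_semiprime: "prime_ring R \<Longrightarrow> semiprime_ring R"
  unfolding prime_ring_def semiprime_ring_def by blast

lemma udim_up: assumes ne: "nicely_essential A R" and uA: "finite_left_udim (R\<lparr>carrier := A\<rparr>)"
  shows "finite_left_udim R"
proof -
  have A: "subring A R" using ne_subring[OF ne] .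
  have Ac: "A \<subseteq> carrier R" using subringE(1)[OF A] .
  obtain N where N: "\<And>n I. (\<forall>i<n. left_ideal (I i) (R\<lparr>carrier := A\<rparr>) \<and> I i \<noteq> {\<zero>\<^bsub>R\<lparr>carrier := A\<rparr>\<^esub>})
      \<and> independent_family (R\<lparr>carrier := A\<rparr>) n I \<Longrightarrow> n \<le> N"
    using uA unfolding finite_left_udim_def by blast
  show ?thesis unfolding finite_left_udim_def
  proof (rule exI[of _ N], intro allI impI)
    fix n J assume h: "(\<forall>i<n. left_ideal (J i) R \<and> J i \<noteq> {\<zero>}) \<and> independent_family R n J"
    define I where "I i = J i \<inter> A" for i
    have Jp: "J i \<subseteq> carrier R \<and> \<zero> \<in> J i \<and> (\<forall>x\<in>J i. \<forall>y\<in>J i. x \<oplus> y \<in> J i) \<and> (\<forall>x\<in>J i. \<ominus> x \<in> J i)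
       \<and> (\<forall>r\<in>carrier R. \<forall>x\<in>J i. r \<otimes> x \<in> J i)" if i: "i < n" for i
      using h i unfolding left_ideal_def addsub_iff by blast
    have Ili: "left_ideal (I i) (R\<lparr>carrier := A\<rparr>)" if i: "i < n" for i
      unfolding sub_left_ideal_iff[OF A] I_def
      using Jp[OF i] subringE[OF A] Ac by auto
    have Inz: "I i \<noteq> {\<zero>}" if i: "i < n" for i
    proof -
      obtain y where y: "y \<in> J i" "y \<noteq> \<zero>" using h i Jp[OF i] by blast
      have yc: "y \<in> carrier R" using y Jp[OF i] by blast
      obtain a where a: "a \<in> A" "a \<otimes> y \<noteq> \<zero>" "a \<otimes> y \<in> A" using ne_single[OF ne yc y(2)] by blast
      have "a \<otimes> y \<in> J i" using Jp[OF i] a(1) Ac y(1) by blast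
      then have "a \<otimes> y \<in> I i" using a unfolding I_def by blast
      then show ?thesis using a(2) by blast
    qed
    have Iind: "independent_family (R\<lparr>carrier := A\<rparr>) n I"
      unfolding independent_family_def
    proof (rule allI, rule impI)
      fix v assume hv: "(\<forall>i<n. v i \<in> I i) \<and> finsum (R\<lparr>carrier := A\<rparr>) v {..<n} = \<zero>\<^bsub>R\<lparr>carrier := A\<rparr>\<^esub>"
      have vA: "\<forall>i<n. v i \<in> A" using hv unfolding I_def by blast
      have "finsum R v {..<n} = \<zero>" using hv sub_finsum[OF A vA] by simp
      moreover have "\<forall>i<n. v i \<in> J i" using hv unfolding I_def by blast
      ultimately have "\<forall>i<n. v i = \<zero>" using h unfolding independent_family_def by blast
      then show "\<forall>i<n. v i = \<zero>\<^bsub>R\<lparr>carrier := A\<rparr>\<^esub>" by simp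
    qed
    show "n \<le> N" using Ili Inz Iind by (intro N[of n I]) simp
  qed
qed

lemma gen_key: assumes A: "subring A R" and IA: "I \<subseteq> A" and I0: "\<zero> \<in> I"
  and Iadd: "\<forall>x\<in>I. \<forall>y\<in>I. x \<oplus> y \<in> I" and Imul: "\<forall>r\<in>A. \<forall>x\<in>I. r \<otimes> x \<in> I"
  and y: "y \<in> gen_li R I"
  shows "\<exists>F. finite F \<and> F \<subseteq> carrier R \<and> (\<forall>a\<in>A. (\<forall>f\<in>F. a \<otimes> f \<in> A) \<longrightarrow> a \<otimes> y \<in> I)"
  using y
proof induct
  case gen_zero
  have "\<forall>a\<in>A. a \<otimes> \<zero> \<in> I" using I0 subringE(1)[OF A] by auto
  then show ?case by (intro exI[of _ "{}"]) auto
next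
  case (gen_step s x y)
  have Ac: "A \<subseteq> carrier R" using subringE(1)[OF A] .
  obtain F where F: "finite F" "F \<subseteq> carrier R" "\<forall>a\<in>A. (\<forall>f\<in>F. a \<otimes> f \<in> A) \<longrightarrow> a \<otimes> y \<in> I"
    using gen_step by blast
  have yc: "y \<in> carrier R" using gen_carrier[OF _ gen_step(3)] IA Ac by blast
  have xc: "x \<in> carrier R" using gen_step(2) IA Ac by blast
  have "\<forall>a\<in>A. (\<forall>f\<in>insert s F. a \<otimes> f \<in> A) \<longrightarrow> a \<otimes> (s \<otimes> x \<oplus> y) \<in> I"
  proof (intro ballI impI)
    fix a assume a: "a \<in> A" and af: "\<forall>f\<in>insert s F. a \<otimes> f \<in> A"
    have ac: "a \<in> carrier R" using a Ac by blast
    have "a \<otimes> (s \<otimes> x \<oplus> y) = (a \<otimes> s) \<otimes> x \<oplus> a \<otimes> y"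
      using ac gen_step(1) xc yc by (simp add: r_distr m_assoc)
    moreover have "(a \<otimes> s) \<otimes> x \<in> I" using Imul af gen_step(2) by blast
    moreover have "a \<otimes> y \<in> I" using F(3) a af by blast
    ultimately show "a \<otimes> (s \<otimes> x \<oplus> y) \<in> I" using Iadd by simp
  qed
  then show ?case using F gen_step(1) by (intro exI[of _ "insert s F"]) auto
qed

lemma udim_down: assumes ne: "nicely_essential A R" and uR: "finite_left_udim R"
  shows "finite_left_udim (R\<lparr>carrier := A\<rparr>)"
proof -
  have A: "subring A R" using ne_subring[OF ne] .
  have Ac: "A \<subseteq> carrier R" using subringE(1)[OF A] .
  obtain N where N: "\<And>n J. (\<forall>i<n. left_ideal (J i) R \<and> J i \<noteq> {\<zero>}) \<and> independent_family R n J \<Longrightarrow> n \<le> N"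
    using uR unfolding finite_left_udim_def by blast
  show ?thesis unfolding finite_left_udim_def
  proof (rule exI[of _ N], intro allI impI)
    fix n I assume h: "(\<forall>i<n. left_ideal (I i) (R\<lparr>carrier := A\<rparr>) \<and> I i \<noteq> {\<zero>\<^bsub>R\<lparr>carrier := A\<rparr>\<^esub>})
      \<and> independent_family (R\<lparr>carrier := A\<rparr>) n I"
    have Ili: "I i \<subseteq> A \<and> \<zero> \<in> I i \<and> (\<forall>x\<in>I i. \<forall>y\<in>I i. x \<oplus> y \<in> I i) \<and> (\<forall>x\<in>I i. \<ominus> x \<in> I i)
       \<and> (\<forall>r\<in>A. \<forall>x\<in>I i. r \<otimes> x \<in> I i)" if i: "i < n" for i
    proof -
      have "left_ideal (I i) (R\<lparr>carrier := A\<rparr>)" using h i by blast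
      then show ?thesis unfolding sub_left_ideal_iff[OF A] .
    qed
    have IcR: "I i \<subseteq> carrier R" if i: "i < n" for i using Ili[OF i] Ac by blast
    have Inz: "I i \<noteq> {\<zero>}" if i: "i < n" for i
    proof -
      have "I i \<noteq> {\<zero>\<^bsub>R\<lparr>carrier := A\<rparr>\<^esub>}" using h i by blast
      then show ?thesis by simp
    qed
    have Iind: "\<forall>i<n. v i = \<zero>" if "\<forall>i<n. v i \<in> I i" "finsum R v {..<n} = \<zero>" for v
    proof -
      have vA: "\<forall>i<n. v i \<in> A" using that(1) Ili by blast
      have "finsum (R\<lparr>carrier := A\<rparr>) v {..<n} = \<zero>\<^bsub>R\<lparr>carrier := A\<rparr>\<^esub>" using that(2) sub_finsum[OF A vA] by simp
      then have "\<forall>i<n. v i = \<zero>\<^bsub>R\<lparr>carrier := A\<rparr>\<^esub>" using h that(1) unfolding independent_family_def by blast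
      then show ?thesis by simp
    qed
    define J where "J i = gen_li R (I i)" for i
    have Jli: "left_ideal (J i) R" if i: "i < n" for i unfolding J_def using gen_left_ideal[OF IcR[OF i]] .
    have Jc: "J i \<subseteq> carrier R" if i: "i < n" for i unfolding J_def using gen_carrier[OF IcR[OF i]] by blast
    have Jnz: "J i \<noteq> {\<zero>}" if i: "i < n" for i
    proof -
      obtain x where x: "x \<in> I i" "x \<noteq> \<zero>" using Inz[OF i] Ili[OF i] by blast
      have "x \<in> J i" unfolding J_def using gen_incl[OF IcR[OF i] x(1)] .
      then show ?thesis using x(2) by blast
    qed
    have key: "\<exists>F. finite F \<and> F \<subseteq> carrier R \<and> (\<forall>a\<in>A. (\<forall>f\<in>F. a \<otimes> f \<in> A) \<longrightarrow> a \<otimes> y \<in> I i)"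
      if i: "i < n" and y: "y \<in> J i" for i y
      using gen_key[OF A] Ili[OF i] y unfolding J_def by blast
    have Jind: "independent_family R n J"
      unfolding independent_family_def
    proof (rule allI, rule impI)
      fix v assume hv: "(\<forall>i<n. v i \<in> J i) \<and> finsum R v {..<n} = \<zero>"
      show "\<forall>i<n. v i = \<zero>"
      proof (rule ccontr)
        assume "\<not> (\<forall>i<n. v i = \<zero>)"
        then obtain j where j: "j < n" "v j \<noteq> \<zero>" by blast
        define Pk where "Pk i F \<longleftrightarrow> finite F \<and> F \<subseteq> carrier R \<and> (\<forall>a\<in>A. (\<forall>f\<in>F. a \<otimes> f \<in> A) \<longrightarrow> a \<otimes> v i \<in> I i)" for i F
        have "\<forall>i. \<exists>F. i < n \<longrightarrow> Pk i F"
        proof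
          fix i show "\<exists>F. i < n \<longrightarrow> Pk i F"
          proof (cases "i < n")
            case True
            then have "v i \<in> J i" using hv by blast
            then have "\<exists>F. Pk i F" unfolding Pk_def by (rule key[OF True])
            then show ?thesis by blast
          qed simp
        qed
        from choice[OF this] obtain F where F0: "\<And>i. i < n \<Longrightarrow> Pk i (F i)" by blast
        have F: "finite (F i) \<and> F i \<subseteq> carrier R \<and> (\<forall>a\<in>A. (\<forall>f\<in>F i. a \<otimes> f \<in> A) \<longrightarrow> a \<otimes> v i \<in> I i)"
          if "i < n" for i using F0[OF that] unfolding Pk_def .
        define E where "E = (\<Union>i\<in>{..<n}. F i \<union> {v i}) - {\<zero>}"
        have "finite (\<Union>i\<in>{..<n}. F i \<union> {v i})"
        proof (rule finite_UN_I)
          fix i assume "i \<in> {..<n}"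
          then have "i < n" by simp
          then have "finite (F i)" using F by blast
          then show "finite (F i \<union> {v i})" by simp
        qed simp
        then have Efin: "finite E" unfolding E_def by simp
        have vc: "v i \<in> carrier R" if "i < n" for i using hv that Jc by blast
        have Esub: "E \<subseteq> carrier R - {\<zero>}"
        proof
          fix x assume "x \<in> E"
          then obtain i where i0: "i \<in> {..<n}" "x \<in> F i \<or> x = v i" "x \<noteq> \<zero>" unfolding E_def by blast
          then have i: "i < n" "x \<in> F i \<or> x = v i" "x \<noteq> \<zero>" by auto
          have "F i \<subseteq> carrier R" using F[OF i(1)] by blast
          then show "x \<in> carrier R - {\<zero>}" using i vc[OF i(1)] by blast
        qed
        have "\<forall>E. finite E \<and> E \<subseteq> carrier R - {\<zero>} \<longrightarrow> (\<exists>a\<in>A. \<forall>x\<in>E. a \<otimes> x \<noteq> \<zero> \<and> a \<otimes> x \<in> A)"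
          using ne unfolding nicely_essential_def by blast
        then have "\<exists>a\<in>A. \<forall>x\<in>E. a \<otimes> x \<noteq> \<zero> \<and> a \<otimes> x \<in> A" using Efin Esub by blast
        then obtain a where a: "a \<in> A" "\<forall>x\<in>E. a \<otimes> x \<noteq> \<zero> \<and> a \<otimes> x \<in> A" by blast
        have ac: "a \<in> carrier R" using a Ac by blast
        have av: "a \<otimes> v i \<in> I i" if i: "i < n" for i
        proof -
          have "\<forall>f\<in>F i. a \<otimes> f \<in> A"
          proof
            fix f assume f: "f \<in> F i"
            show "a \<otimes> f \<in> A"
            proof (cases "f = \<zero>")
              case True then show ?thesis using ac subringE(2)[OF A] by simp
            next
              case False
              have "i \<in> {..<n}" using i by simp
              then have "f \<in> E" unfolding E_def using f False by blast
              then show ?thesis using a by blast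
            qed
          qed
          then show ?thesis using F[OF i] a(1) by blast
        qed
        have "finsum R (\<lambda>i. a \<otimes> v i) {..<n} = a \<otimes> finsum R v {..<n}"
          using finsum_rdistr[of "{..<n}" a v] ac vc by auto
        also have "\<dots> = \<zero>" using hv ac by simp
        finally have s0: "finsum R (\<lambda>i. a \<otimes> v i) {..<n} = \<zero>" .
        have "\<forall>i<n. a \<otimes> v i \<in> I i" using av by blast
        then have "\<forall>i<n. a \<otimes> v i = \<zero>" using Iind[of "\<lambda>i. a \<otimes> v i"] s0 by simp
        then have "a \<otimes> v j = \<zero>" using j by blast
        moreover have "j \<in> {..<n}" using j by simp
        then have "v j \<in> E" unfolding E_def using j by blast
        ultimately show False using a by blast
      qed
    qed
    show "n \<le> N" using Jli Jnz Jind by (intro N[of n J]) simp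
  qed
qed

lemma acc_down: assumes A: "subring A R" and acc: "acc_left_ann R"
  shows "acc_left_ann (R\<lparr>carrier := A\<rparr>)"
  unfolding acc_left_ann_def
proof (intro allI impI)
  fix f :: "nat \<Rightarrow> 'a set"
  assume hf: "(\<forall>n. \<exists>Y. Y \<subseteq> carrier (R\<lparr>carrier := A\<rparr>) \<and> f n = left_ann (R\<lparr>carrier := A\<rparr>) Y) \<and> (\<forall>n. f n \<subseteq> f (Suc n))"
  have Ac: "A \<subseteq> carrier R" using subringE(1)[OF A] .
  have "\<forall>n. \<exists>Y. Y \<subseteq> A \<and> f n = left_ann (R\<lparr>carrier := A\<rparr>) Y" using hf by simp
  from choice[OF this] obtain Y where Y: "\<And>n. Y n \<subseteq> A" "\<And>n. f n = left_ann (R\<lparr>carrier := A\<rparr>) (Y n)" by blast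
  have fA: "f n = {r. r \<in> A \<and> (\<forall>y\<in>Y n. r \<otimes> y = \<zero>)}" for n using Y(2)[of n] by (simp add: left_ann_def)
  define Y' where "Y' n = {y\<in>A. \<forall>r\<in>f n. r \<otimes> y = \<zero>}" for n
  define g where "g n = left_ann R (Y' n)" for n
  have Y'c: "Y' n \<subseteq> carrier R" for n unfolding Y'_def using Ac by blast
  have gA: "g n \<inter> A = f n" for n
  proof
    show "g n \<inter> A \<subseteq> f n"
    proof
      fix r assume r: "r \<in> g n \<inter> A"
      have "Y n \<subseteq> Y' n" unfolding Y'_def using Y(1) fA by blast
      then have "\<forall>y\<in>Y n. r \<otimes> y = \<zero>" using r unfolding g_def left_ann_def by blast
      then show "r \<in> f n" using r fA by blast
    qed
    show "f n \<subseteq> g n \<inter> A"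
    proof
      fix r assume r: "r \<in> f n"
      then have "r \<in> A" using fA by blast
      then show "r \<in> g n \<inter> A" using r Ac unfolding g_def left_ann_def Y'_def by blast
    qed
  qed
  have gmono: "\<forall>n. g n \<subseteq> g (Suc n)"
  proof
    fix n
    have "Y' (Suc n) \<subseteq> Y' n" unfolding Y'_def using hf by blast
    then show "g n \<subseteq> g (Suc n)" unfolding g_def left_ann_def by blast
  qed
  have "\<forall>n. \<exists>Y. Y \<subseteq> carrier R \<and> g n = left_ann R Y" unfolding g_def using Y'c by blast
  then obtain m where m: "\<forall>n\<ge>m. g n = g m" using acc[unfolded acc_left_ann_def, rule_format, of g] gmono by blast
  show "\<exists>m. \<forall>n\<ge>m. f n = f m"
  proof (intro exI allI impI)
    fix n assume "m \<le> n"
    then have "g n = g m" using m by blast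
    then show "f n = f m" using gA[of n] gA[of m] by simp
  qed
qed

lemma nonsing_up: assumes ne: "nicely_essential A R" and nsA: "nonsingular (R\<lparr>carrier := A\<rparr>)"
  shows "nonsingular R"
  unfolding nonsingular_def
proof (intro ballI impI)
  have A: "subring A R" using ne_subring[OF ne] .
  have Ac: "A \<subseteq> carrier R" using subringE(1)[OF A] .
  fix x assume x: "x \<in> carrier R" and sx: "sing_el R x"
  show "x = \<zero>"
  proof (rule ccontr)
    assume x0: "x \<noteq> \<zero>"
    obtain a where a: "a \<in> A" "a \<otimes> x \<noteq> \<zero>" "a \<otimes> x \<in> A" using ne_single[OF ne x x0] by blast
    have ac: "a \<in> carrier R" using a Ac by blast
    have "\<forall>b\<in>A. b \<noteq> \<zero> \<longrightarrow> (\<exists>d\<in>A. d \<otimes> b \<noteq> \<zero> \<and> d \<otimes> b \<otimes> (a \<otimes> x) = \<zero>)"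
    proof (intro ballI impI)
      fix b assume b: "b \<in> A" "b \<noteq> \<zero>"
      have bc: "b \<in> carrier R" using b Ac by blast
      show "\<exists>d\<in>A. d \<otimes> b \<noteq> \<zero> \<and> d \<otimes> b \<otimes> (a \<otimes> x) = \<zero>"
      proof (cases "b \<otimes> a = \<zero>")
        case True
        have "\<one> \<otimes> b \<otimes> (a \<otimes> x) = (b \<otimes> a) \<otimes> x" using bc ac x by (simp add: m_assoc)
        then have "\<one> \<otimes> b \<otimes> (a \<otimes> x) = \<zero>" using True x by simp
        then show ?thesis using b bc subringE(3)[OF A] by (intro bexI[of _ \<one>]) auto
      next
        case False
        have bac: "b \<otimes> a \<in> carrier R" using bc ac by simp
        obtain d' where d': "d' \<in> carrier R" "d' \<otimes> (b \<otimes> a) \<noteq> \<zero>" "d' \<otimes> (b \<otimes> a) \<otimes> x = \<zero>"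
          using sx bac False unfolding sing_el_def by blast
        have d'0: "d' \<noteq> \<zero>" using d' bac by auto
        have dbac: "d' \<otimes> (b \<otimes> a) \<in> carrier R" using d' bac by simp
        obtain e where e: "e \<in> A" "e \<otimes> d' \<noteq> \<zero>" "e \<otimes> d' \<in> A" "e \<otimes> (d' \<otimes> (b \<otimes> a)) \<noteq> \<zero>"
          using ne_pair[OF ne d'(1) d'0 dbac d'(2)] by blast
        have ec: "e \<in> carrier R" using e Ac by blast
        have "e \<otimes> d' \<otimes> b \<noteq> \<zero>"
        proof
          assume h0: "e \<otimes> d' \<otimes> b = \<zero>"
          have "e \<otimes> (d' \<otimes> (b \<otimes> a)) = (e \<otimes> d' \<otimes> b) \<otimes> a" using ec d'(1) bc ac by (simp add: m_assoc)
          then show False using h0 e(4) ac by simp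
        qed
        moreover have "e \<otimes> d' \<otimes> b \<otimes> (a \<otimes> x) = e \<otimes> (d' \<otimes> (b \<otimes> a) \<otimes> x)"
          using ec d'(1) bc ac x by (simp add: m_assoc)
        moreover have "e \<otimes> (d' \<otimes> (b \<otimes> a) \<otimes> x) = \<zero>" using d'(3) ec by simp
        ultimately show ?thesis using e(3) by metis
      qed
    qed
    then have "sing_el (R\<lparr>carrier := A\<rparr>) (a \<otimes> x)" unfolding sing_el_def by simp
    then have "a \<otimes> x = \<zero>" using nsA a(3) unfolding nonsingular_def by simp
    then show False using a(2) by simp
  qed
qed

lemma lreg_up: assumes ne: "nicely_essential B R" and c: "left_regular_in c B R"
  shows "c \<in> B" "\<forall>t\<in>carrier R. t \<otimes> c = \<zero> \<longrightarrow> t = \<zero>"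
proof -
  have Bs: "subring B R" using ne_subring[OF ne] .
  have Bc: "B \<subseteq> carrier R" using subringE(1)[OF Bs] .
  show cB: "c \<in> B" using c unfolding left_regular_in_def by blast
  have reg: "{a. a \<in> B \<and> a \<otimes> c = \<zero>} = {\<zero>}" using c unfolding left_regular_in_def by blast
  show "\<forall>t\<in>carrier R. t \<otimes> c = \<zero> \<longrightarrow> t = \<zero>"
  proof (intro ballI impI)
    fix t assume t: "t \<in> carrier R" and tc: "t \<otimes> c = \<zero>"
    show "t = \<zero>"
    proof (rule ccontr)
      assume t0: "t \<noteq> \<zero>"
      obtain a where a: "a \<in> B" "a \<otimes> t \<noteq> \<zero>" "a \<otimes> t \<in> B" using ne_single[OF ne t t0] by blast
      have "(a \<otimes> t) \<otimes> c = a \<otimes> (t \<otimes> c)" using a(1) Bc t cB by (simp add: m_assoc subset_eq)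
      then have "(a \<otimes> t) \<otimes> c = \<zero>" using tc a(1) Bc by (simp add: subset_eq)
      then have "a \<otimes> t \<in> {a. a \<in> B \<and> a \<otimes> c = \<zero>}" using a(3) by blast
      then show False using reg a(2) by blast
    qed
  qed
qed

end

lemma part3:
  fixes S :: "('a, 'b) ring_scheme" and B :: "'a set"
  assumes S: "ring S" and sne: "strongly_nicely_essential B S"
    and sp: "semiprime_ring S" and gS: "left_goldie S"
  shows "semiprime_ring (S\<lparr>carrier := B\<rparr>)" "left_goldie (S\<lparr>carrier := B\<rparr>)"
    "\<And>a b. a \<in> B \<Longrightarrow> b \<in> B \<Longrightarrow> (\<forall>r\<in>B. a \<otimes>\<^bsub>S\<^esub> r \<otimes>\<^bsub>S\<^esub> b = \<zero>\<^bsub>S\<^esub>) \<Longrightarrow> (\<forall>s\<in>carrier S. a \<otimes>\<^bsub>S\<^esub> s \<otimes>\<^bsub>S\<^esub> b = \<zero>\<^bsub>S\<^esub>)"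
proof -
  interpret S: ring S by (rule S)
  have neB: "nicely_essential B S" using sne unfolding strongly_nicely_essential_def by blast
  have Bs: "subring B S" using S.ne_subring[OF neB] .
  have Bc: "B \<subseteq> carrier S" using subringE(1)[OF Bs] .
  have ud: "finite_left_udim S" and acc: "acc_left_ann S" using gS unfolding left_goldie_def by auto
  have ns: "nonsingular S" using S.semiprime_acc_nonsing[OF sp acc] .
  have strong: "\<exists>c. c \<in> B \<and> (\<forall>t\<in>carrier S. t \<otimes>\<^bsub>S\<^esub> c = \<zero>\<^bsub>S\<^esub> \<longrightarrow> t = \<zero>\<^bsub>S\<^esub>) \<and> c \<otimes>\<^bsub>S\<^esub> x \<in> B"
    if x: "x \<in> carrier S" for x
  proof -
    obtain c where c: "left_regular_in c B S" "c \<otimes>\<^bsub>S\<^esub> x \<in> B"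
      using sne x unfolding strongly_nicely_essential_def by blast
    show ?thesis using S.lreg_up[OF neB c(1)] c(2) by blast
  qed
  show SL: "\<And>a b. a \<in> B \<Longrightarrow> b \<in> B \<Longrightarrow> (\<forall>r\<in>B. a \<otimes>\<^bsub>S\<^esub> r \<otimes>\<^bsub>S\<^esub> b = \<zero>\<^bsub>S\<^esub>) \<Longrightarrow> (\<forall>s\<in>carrier S. a \<otimes>\<^bsub>S\<^esub> s \<otimes>\<^bsub>S\<^esub> b = \<zero>\<^bsub>S\<^esub>)"
  proof (intro ballI)
    fix a b s assume a: "a \<in> B" and b: "b \<in> B" and h: "\<forall>r\<in>B. a \<otimes>\<^bsub>S\<^esub> r \<otimes>\<^bsub>S\<^esub> b = \<zero>\<^bsub>S\<^esub>" and s: "s \<in> carrier S"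
    show "a \<otimes>\<^bsub>S\<^esub> s \<otimes>\<^bsub>S\<^esub> b = \<zero>\<^bsub>S\<^esub>"
      using S.strong_lemma[OF ud ns Bc _ strong, of b a s] subringE(6)[OF Bs] a b h s Bc by blast
  qed
  show "semiprime_ring (S\<lparr>carrier := B\<rparr>)"
    unfolding semiprime_ring_def
  proof (simp, intro ballI impI)
    fix a assume a: "a \<in> B" and h: "\<forall>r\<in>B. a \<otimes>\<^bsub>S\<^esub> r \<otimes>\<^bsub>S\<^esub> a = \<zero>\<^bsub>S\<^esub>"
    have "\<forall>s\<in>carrier S. a \<otimes>\<^bsub>S\<^esub> s \<otimes>\<^bsub>S\<^esub> a = \<zero>\<^bsub>S\<^esub>" using SL[OF a a h] .
    then show "a = \<zero>\<^bsub>S\<^esub>" using sp a Bc unfolding semiprime_ring_def by blast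
  qed
  show "left_goldie (S\<lparr>carrier := B\<rparr>)"
    unfolding left_goldie_def using S.udim_down[OF neB ud] S.acc_down[OF Bs acc] by blast
qed

theorem mainTheorem4:
  fixes S :: "('a, 'b) ring_scheme" and A :: "'a set"
  assumes "ring S" and "subring A S" and "nicely_essential A S"
  shows "(prime_ring (S\<lparr>carrier := A\<rparr>) \<longrightarrow> prime_ring S)
       \<and> (semiprime_ring (S\<lparr>carrier := A\<rparr>) \<longrightarrow> semiprime_ring S)
       \<and> (prime_ring (S\<lparr>carrier := A\<rparr>) \<and> left_goldie (S\<lparr>carrier := A\<rparr>)
            \<longrightarrow> prime_ring S \<and> left_goldie S)
       \<and> (semiprime_ring (S\<lparr>carrier := A\<rparr>) \<and> left_goldie (S\<lparr>carrier := A\<rparr>)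
            \<longrightarrow> semiprime_ring S \<and> left_goldie S)
       \<and> (left_goldie S \<longrightarrow> left_goldie (S\<lparr>carrier := A\<rparr>))
       \<and> (\<forall>B. strongly_nicely_essential B S \<longrightarrow>
            (prime_ring S \<and> left_goldie S
               \<longrightarrow> prime_ring (S\<lparr>carrier := B\<rparr>) \<and> left_goldie (S\<lparr>carrier := B\<rparr>))
          \<and> (semiprime_ring S \<and> left_goldie S
               \<longrightarrow> semiprime_ring (S\<lparr>carrier := B\<rparr>) \<and> left_goldie (S\<lparr>carrier := B\<rparr>)))"
proof -
  interpret S: ring S by (rule assms(1))
  have Ar: "ring (S\<lparr>carrier := A\<rparr>)" using S.subring_is_ring[OF assms(2)] .
  interpret A: ring "S\<lparr>carrier := A\<rparr>" by (rule Ar)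
  have ne: "nicely_essential A S" by (rule assms(3))
  have P1: "prime_ring (S\<lparr>carrier := A\<rparr>) \<longrightarrow> prime_ring S" using S.prime_up[OF ne] by blast
  have P2: "semiprime_ring (S\<lparr>carrier := A\<rparr>) \<longrightarrow> semiprime_ring S" using S.semiprime_up[OF ne] by blast
  have G: "semiprime_ring (S\<lparr>carrier := A\<rparr>) \<and> left_goldie (S\<lparr>carrier := A\<rparr>) \<longrightarrow> left_goldie S"
  proof
    assume h: "semiprime_ring (S\<lparr>carrier := A\<rparr>) \<and> left_goldie (S\<lparr>carrier := A\<rparr>)"
    have uA: "finite_left_udim (S\<lparr>carrier := A\<rparr>)" and accA: "acc_left_ann (S\<lparr>carrier := A\<rparr>)"
      using h unfolding left_goldie_def by auto
    have uS: "finite_left_udim S" using S.udim_up[OF ne uA] .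
    have nsA: "nonsingular (S\<lparr>carrier := A\<rparr>)" using A.semiprime_acc_nonsing h accA by blast
    have nsS: "nonsingular S" using S.nonsing_up[OF ne nsA] .
    have "acc_left_ann S" using S.nonsing_udim_acc[OF nsS uS] .
    then show "left_goldie S" using uS unfolding left_goldie_def by blast
  qed
  have P5: "left_goldie S \<longrightarrow> left_goldie (S\<lparr>carrier := A\<rparr>)"
    unfolding left_goldie_def using S.udim_down[OF ne] S.acc_down[OF assms(2)] by blast
  have P6: "\<forall>B. strongly_nicely_essential B S \<longrightarrow>
            (prime_ring S \<and> left_goldie S
               \<longrightarrow> prime_ring (S\<lparr>carrier := B\<rparr>) \<and> left_goldie (S\<lparr>carrier := B\<rparr>))
          \<and> (semiprime_ring S \<and> left_goldie S
               \<longrightarrow> semiprime_ring (S\<lparr>carrier := B\<rparr>) \<and> left_goldie (S\<lparr>carrier := B\<rparr>))"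
  proof (intro allI impI conjI)
    fix B assume sne: "strongly_nicely_essential B S"
    {
      assume pgS: "prime_ring S \<and> left_goldie S"
      then have pS: "prime_ring S" and gS: "left_goldie S" by auto
      have sp: "semiprime_ring S" using S.prime_imp_semiprime[OF pS] .
      show "left_goldie (S\<lparr>carrier := B\<rparr>)" using part3(2)[OF assms(1) sne sp gS] .
      have SL: "\<And>a b. a \<in> B \<Longrightarrow> b \<in> B \<Longrightarrow> (\<forall>r\<in>B. a \<otimes>\<^bsub>S\<^esub> r \<otimes>\<^bsub>S\<^esub> b = \<zero>\<^bsub>S\<^esub>) \<Longrightarrow> (\<forall>s\<in>carrier S. a \<otimes>\<^bsub>S\<^esub> s \<otimes>\<^bsub>S\<^esub> b = \<zero>\<^bsub>S\<^esub>)"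
        using part3(3)[OF assms(1) sne sp gS] by blast
      have neB: "nicely_essential B S" using sne unfolding strongly_nicely_essential_def by blast
      have Bc: "B \<subseteq> carrier S" using subringE(1)[OF S.ne_subring[OF neB]] .
      show "prime_ring (S\<lparr>carrier := B\<rparr>)"
        unfolding prime_ring_def
      proof (simp, intro conjI ballI impI)
        show "\<one>\<^bsub>S\<^esub> \<noteq> \<zero>\<^bsub>S\<^esub>" using pS unfolding prime_ring_def by blast
        fix a b assume a: "a \<in> B" and b: "b \<in> B" and h: "\<forall>r\<in>B. a \<otimes>\<^bsub>S\<^esub> r \<otimes>\<^bsub>S\<^esub> b = \<zero>\<^bsub>S\<^esub>"
        have "\<forall>s\<in>carrier S. a \<otimes>\<^bsub>S\<^esub> s \<otimes>\<^bsub>S\<^esub> b = \<zero>\<^bsub>S\<^esub>" using SL[OF a b h] .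
        then show "a = \<zero>\<^bsub>S\<^esub> \<or> b = \<zero>\<^bsub>S\<^esub>" using pS a b Bc unfolding prime_ring_def by blast
      qed
    }
    {
      assume sgS: "semiprime_ring S \<and> left_goldie S"
      then have sp: "semiprime_ring S" and gS: "left_goldie S" by auto
      show "semiprime_ring (S\<lparr>carrier := B\<rparr>)" using part3(1)[OF assms(1) sne sp gS] .
      show "left_goldie (S\<lparr>carrier := B\<rparr>)" using part3(2)[OF assms(1) sne sp gS] .
    }
  qed
  show ?thesis using P1 P2 G P5 P6 A.prime_imp_semiprime by blast
qed

end
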